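(* Let $a\ge0$ and, for $m\ge0$, set $\Omega(a,m)=\{b\ge0:\ \sup_{t\in\mathbb{R}}|\cos(ta)-\cos(tb)|\le m\}$. (i) If $m<2$, then $\Omega(a,m)$ is finite, and every $b\in\Omega(a,m)$ has the form $b=\frac{pa}{q}$ where $p,q$ are odd positive integers with $\gcd(p,q)=1$, $1\le p\le\frac{\pi}{\arccos(m-1)}$ and $1\le q\le\frac{\pi}{\arccos(m-1)}$. (ii) If $m<\frac{8}{3\sqrt3}$, then $\Omega(a,m)=\{a\}$. *)

theory Defs
  imports Complex_Main
begin

definition Omega :: "real \<Rightarrow> real \<Rightarrow> real set" where
  "Omega a m = {b. b \<ge> 0 \<and> (SUP t::real. \<bar>cos (t * a) - cos (t * b)\<bar>) \<le> m}"

end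

theory Submission
  imports Defs "HOL-Analysis.Kronecker_Approximation_Theorem"
begin

lemma Omega_iff:
  "b \<in> Omega a m \<longleftrightarrow> b \<ge> 0 \<and> (\<forall>t. \<bar>cos (t * a) - cos (t * b)\<bar> \<le> m)"
proof -
  have bdd: "bdd_above (range (\<lambda>t. \<bar>cos (t * a) - cos (t * b)\<bar>))"
  proof (rule bdd_aboveI[of _ 2])
    fix x assume "x \<in> range (\<lambda>t. \<bar>cos (t * a) - cos (t * b)\<bar>)"
    then obtain t where "x = \<bar>cos (t * a) - cos (t * b)\<bar>" by auto
    moreover have "\<bar>cos (t * a)\<bar> \<le> 1" "\<bar>cos (t * b)\<bar> \<le> 1" by auto
    ultimately show "x \<le> 2" by linarith
  qed
  show ?thesis unfolding Omega_def
    using cSUP_le_iff[OF _ bdd, of m] by auto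
qed

lemma gen_s:
  fixes p q :: nat
  assumes "0 < p" "odd q" "coprime p q"
  shows "\<exists>s. cos (real p * s) = -1 \<and> cos (real q * s) = cos (pi / real p)"
proof -
  have c1: "coprime (int q) (int p)" using assms(3) by (simp add: coprime_commute)
  have c2: "coprime (int q) 2" using assms(2) by simp
  have "coprime (int q) (2 * int p)" using c1 c2 by simp
  then have "gcd (int q) (2 * int p) = 1" by simp
  then obtain u v where uv: "u * int q + v * (2 * int p) = 1" using bezout_int[of "int q" "2 * int p"] by metis
  have "odd u"
  proof
    assume "even u"
    then have "even (u * int q + v * (2 * int p))" by simp
    then show False using uv by simp
  qed
  define s where "s = of_int u * pi / real p"
  have ps: "real p * s = pi * of_int u" using assms(1) by (simp add: s_def)
  have e: "real_of_int u * real q = 1 - 2 * real_of_int v * real p"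
    using arg_cong[OF uv, of real_of_int] by (simp add: algebra_simps)
  have "real q * s = pi * (real_of_int u * real q) / real p" by (simp add: s_def)
  also have "\<dots> = pi * (1 - 2 * real_of_int v * real p) / real p" using e by simp
  also have "\<dots> = pi / real p - (2 * pi) * of_int v" using assms(1) by (simp add: field_simps)
  finally have qs: "cos (real q * s) = cos (pi / real p)"
    by (simp add: cos_diff)
  have c: "cos (real p * s) = -1" unfolding ps using \<open>odd u\<close> by (simp add: cos_npi_int)
  show ?thesis using c qs by blast
qed

lemma irr_case:
  fixes a b m :: real
  assumes a: "a > 0" and irr: "b / a \<notin> \<rat>" and m: "m < 2" and m0: "m \<ge> 0"
  shows "\<exists>t. \<bar>cos (t * a) - cos (t * b)\<bar> > m"
proof -
  define \<epsilon> where "\<epsilon> = (2 - m) / 80"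
  have ep: "\<epsilon> > 0" using m by (simp add: \<epsilon>_def)
  obtain h k where "k > 0" and hk: "\<bar>of_int k * (b / a) - of_int h - 1/2\<bar> < \<epsilon>"
    using sequence_of_fractional_parts_is_dense[OF irr ep, of "1/2"] by metis
  define \<delta> where "\<delta> = of_int k * (b / a) - of_int h - 1/2"
  define t where "t = 2 * pi * of_int k / a"
  have ta: "t * a = (2 * pi) * of_int k" using a by (simp add: t_def)
  have tb: "t * b = (2 * pi * \<delta> + pi) + (2 * pi) * of_int h"
    using a by (simp add: t_def \<delta>_def field_simps)
  have c1: "cos (t * a) = 1" using ta by simp
  have c2: "cos (t * b) = - cos (2 * pi * \<delta>)"
    unfolding tb by (simp add: cos_add sin_add)
  have c3: "cos (2 * pi * \<delta>) = 1 - 2 * sin (pi * \<delta>) ^ 2"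
    using cos_double_sin[of "pi * \<delta>"] by (simp add: mult.assoc)
  have "\<bar>sin (pi * \<delta>)\<bar> \<le> \<bar>pi * \<delta>\<bar>" by (rule abs_sin_x_le_abs_x)
  then have s1: "sin (pi * \<delta>) ^ 2 \<le> (pi * \<delta>) ^ 2" by (simp add: abs_le_square_iff)
  have d: "\<bar>\<delta>\<bar> < \<epsilon>" using hk by (simp add: \<delta>_def)
  have "\<bar>\<delta>\<bar> * \<bar>\<delta>\<bar> \<le> \<epsilon> * \<epsilon>" using d by (intro mult_mono) auto
  then have d2: "\<delta> ^ 2 \<le> \<epsilon> ^ 2" by (simp add: power2_eq_square)
  have "pi ^ 2 \<le> 4 ^ 2" using pi_less_4 by (intro power_mono) auto
  then have p2: "pi ^ 2 \<le> 16" by simp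
  have "(pi * \<delta>) ^ 2 = pi ^ 2 * \<delta> ^ 2" by (simp add: power_mult_distrib)
  also have "\<dots> \<le> 16 * \<epsilon> ^ 2" using p2 d2 by (intro mult_mono) auto
  finally have s2: "(pi * \<delta>) ^ 2 \<le> 16 * \<epsilon> ^ 2" .
  have e40: "\<epsilon> \<le> 1/40" using m0 by (simp add: \<epsilon>_def)
  have "\<epsilon> * \<epsilon> \<le> \<epsilon> * (1/40)" using e40 ep by (intro mult_left_mono) auto
  then have e2: "\<epsilon> ^ 2 \<le> \<epsilon> / 40" by (simp add: power2_eq_square)
  have sq1: "sin (pi * \<delta>) ^ 2 \<le> 1" by (simp add: abs_square_le_1)
  have eq: "\<bar>cos (t * a) - cos (t * b)\<bar> = 2 - 2 * sin (pi * \<delta>) ^ 2"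
    using c1 c2 c3 sq1 by simp
  have e80: "2 - m = 80 * \<epsilon>" by (simp add: \<epsilon>_def)
  have "2 - 2 * sin (pi * \<delta>) ^ 2 > m" using s1 s2 e2 e80 ep by linarith
  then show ?thesis using eq by metis
qed

lemma main:
  fixes a b m :: real
  assumes a: "a > 0" and b: "b \<ge> 0" and m: "m < 2" and m0: "m \<ge> 0"
    and H: "\<forall>t. \<bar>cos (t * a) - cos (t * b)\<bar> \<le> m"
  shows "\<exists>p q::nat. odd p \<and> odd q \<and> coprime p q \<and> 1 \<le> p \<and> 1 \<le> q \<and>
           b = real p * a / real q \<and> cos (pi / real p) + 1 \<le> m \<and> cos (pi / real q) + 1 \<le> m"
proof -
  have "b \<noteq> 0"
  proof
    assume "b = 0"
    have "\<bar>cos ((pi / a) * a) - cos ((pi / a) * b)\<bar> = 2" using a \<open>b = 0\<close> by simp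
    then show False using H[rule_format, of "pi / a"] m by linarith
  qed
  have "b / a \<in> \<rat>"
  proof (rule ccontr)
    assume "b / a \<notin> \<rat>"
    then obtain t where "\<bar>cos (t * a) - cos (t * b)\<bar> > m" using irr_case a m m0 by blast
    then show False using H[rule_format, of t] by linarith
  qed
  then obtain p q :: nat where q0: "q \<noteq> 0" and pq: "\<bar>b / a\<bar> = real p / real q"
    and cop: "coprime p q" by (rule Rats_abs_nat_div_natE)
  have "b / a = real p / real q" using pq a b by simp
  then have bpq: "b = real p * a / real q" using a q0 by (simp add: field_simps)
  have p0: "p \<noteq> 0" using bpq \<open>b \<noteq> 0\<close> by auto
  have K: "\<bar>cos (real q * s) - cos (real p * s)\<bar> \<le> m" for s
  proof -
    have "(real q * s / a) * a = real q * s" using a by simp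
    moreover have "(real q * s / a) * b = real p * s" using a q0 bpq by (simp add: field_simps)
    ultimately show ?thesis using H[rule_format, of "real q * s / a"] by simp
  qed
  have "odd p"
  proof
    assume "even p"
    have "odd q"
    proof
      assume "even q"
      then show False using cop coprime_common_divisor[of p q 2] \<open>even p\<close> by auto
    qed
    have "\<bar>cos (real q * pi) - cos (real p * pi)\<bar> = 2" using \<open>even p\<close> \<open>odd q\<close> by (simp add: cos_npi)
    then show False using K[of pi] m by linarith
  qed
  have "odd q"
  proof
    assume "even q"
    have "\<bar>cos (real q * pi) - cos (real p * pi)\<bar> = 2" using \<open>odd p\<close> \<open>even q\<close> by (simp add: cos_npi)
    then show False using K[of pi] m by linarith
  qed
  obtain s1 where s1: "cos (real p * s1) = -1" "cos (real q * s1) = cos (pi / real p)"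
    using gen_s[of p q] p0 \<open>odd q\<close> cop by auto
  obtain s2 where s2: "cos (real q * s2) = -1" "cos (real p * s2) = cos (pi / real q)"
    using gen_s[of q p] q0 \<open>odd p\<close> cop by (auto simp: coprime_commute)
  have "\<bar>cos (pi / real p) + 1\<bar> \<le> m" using K[of s1] s1 by simp
  then have r1: "cos (pi / real p) + 1 \<le> m" by (simp add: abs_le_iff)
  have "\<bar>-1 - cos (pi / real q)\<bar> \<le> m" using K[of s2] s2 by simp
  then have r2: "cos (pi / real q) + 1 \<le> m" by (simp add: abs_le_iff)
  show ?thesis using \<open>odd p\<close> \<open>odd q\<close> cop p0 q0 bpq r1 r2 by (intro exI[of _ p] exI[of _ q]) auto
qed

lemma bound:
  fixes p :: nat
  assumes p1: "1 \<le> p" and c: "cos (pi / real p) + 1 \<le> m" and m: "m < 2"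
  shows "real p \<le> pi / arccos (m - 1)"
proof -
  have ar: "arccos (m - 1) \<le> arccos (cos (pi / real p))"
    by (rule arccos_le_arccos) (use assms in auto)
  have "pi / real p \<le> pi / 1" by (rule divide_left_mono) (use p1 in auto)
  then have "arccos (cos (pi / real p)) = pi / real p" by (intro arccos_cos) auto
  with ar have le: "arccos (m - 1) \<le> pi / real p" by simp
  have rng: "-1 \<le> m - 1" "m - 1 \<le> 1" using c m cos_ge_minus_one[of "pi / real p"] by linarith+
  have pos: "0 < arccos (m - 1)"
  proof -
    have "0 \<le> arccos (m - 1)" using arccos_bounded rng by blast
    moreover have "arccos (m - 1) \<noteq> 0"
    proof
      assume "arccos (m - 1) = 0"
      then have "cos (arccos (m - 1)) = 1" by simp
      then show False using arccos[OF rng] m by simp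
    qed
    ultimately show ?thesis by linarith
  qed
  have "real p * arccos (m - 1) \<le> real p * (pi / real p)" using le by (intro mult_left_mono) auto
  also have "\<dots> = pi" using p1 by simp
  finally show ?thesis using pos by (simp add: pos_le_divide_eq)
qed

lemma zero_case:
  assumes "m < 2" "b \<in> Omega 0 m" shows "b = 0"
proof (rule ccontr)
  assume "b \<noteq> 0"
  have H: "\<forall>t. \<bar>cos (t * 0) - cos (t * b)\<bar> \<le> m" "b \<ge> 0" using assms(2) by (auto simp: Omega_iff)
  have "\<bar>cos ((pi / b) * 0) - cos ((pi / b) * b)\<bar> = 2" using \<open>b \<noteq> 0\<close> by simp
  then show False using H(1)[rule_format, of "pi / b"] assms(1) by linarith
qed

lemma natbound:
  fixes p :: nat assumes "real p \<le> N" shows "p \<le> nat \<lceil>N\<rceil>"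
proof -
  have "real p \<le> real_of_int \<lceil>N\<rceil>" using assms le_of_int_ceiling order_trans by blast
  then have "int p \<le> \<lceil>N\<rceil>" by linarith
  then show ?thesis by linarith
qed

lemma small:
  fixes p :: nat
  assumes "odd p" "cos (pi / real p) + 1 \<le> m" "m < sqrt 2 / 2 + 1"
  shows "p = 1 \<or> p = 3"
proof (rule ccontr)
  assume "\<not> (p = 1 \<or> p = 3)"
  with assms(1) have p4: "p \<ge> 4" by presburger
  have "pi / real p \<le> pi / 4" by (rule divide_left_mono) (use p4 in auto)
  moreover have "0 \<le> pi / real p" by simp
  moreover have "pi / real p \<le> pi / 1" by (rule divide_left_mono) (use p4 in auto)
  ultimately have "cos (pi / 4) \<le> cos (pi / real p)"
    by (subst cos_mono_le_eq) auto
  then show False using assms cos_45 by linarith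
qed

lemma triple: "\<exists>s. \<bar>cos (3 * s) - cos s\<bar> = 8 / (3 * sqrt 3)"
proof -
  define c where "c = 1 / sqrt 3"
  have c2: "c ^ 2 = 1 / 3" by (simp add: c_def power_divide)
  have c0: "0 < c" by (simp add: c_def)
  have "1 \<le> sqrt 3" by simp
  then have c1: "c \<le> 1" by (simp add: c_def)
  have cs: "cos (arccos c) = c" using arccos[of c] c0 c1 by simp
  have "cos (3 * arccos c) - cos (arccos c) = 4 * c ^ 3 - 4 * c" by (simp add: cos_treble_cos cs)
  also have "\<dots> = 4 * c * c ^ 2 - 4 * c" by (simp add: power3_eq_cube power2_eq_square)
  also have "\<dots> = - (8 / 3) * c" using c2 by (simp add: algebra_simps)
  finally have "\<bar>cos (3 * arccos c) - cos (arccos c)\<bar> = 8 / 3 * c" using c0 by simp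
  then show ?thesis by (auto simp: c_def)
qed

theorem lemma3p5:
  fixes a m :: real
  assumes "a \<ge> 0" and "m \<ge> 0"
  shows "(m < 2 \<longrightarrow>
            finite (Omega a m) \<and>
            (\<forall>b\<in>Omega a m. \<exists>p q :: nat.
               odd p \<and> odd q \<and> coprime p q \<and>
               1 \<le> p \<and> real p \<le> pi / arccos (m - 1) \<and>
               1 \<le> q \<and> real q \<le> pi / arccos (m - 1) \<and>
               b = real p * a / real q))
       \<and> (m < 8 / (3 * sqrt 3) \<longrightarrow> Omega a m = {a})"
proof -
  have s3: "1.72 < sqrt 3" by (rule real_less_rsqrt) (simp add: power2_eq_square)
  have s2: "1.4 < sqrt 2" by (rule real_less_rsqrt) (simp add: power2_eq_square)
  have "8 < 1.56 * (3 * sqrt 3)" using s3 by simp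
  then have n0: "8 / (3 * sqrt 3) < 1.56" by (simp add: divide_less_eq)
  have num1: "8 / (3 * sqrt 3) < 2" using n0 by simp
  have num2: "8 / (3 * sqrt 3) < sqrt 2 / 2 + 1" using n0 s2 by simp
  have rep: "\<exists>p q :: nat.
               odd p \<and> odd q \<and> coprime p q \<and>
               1 \<le> p \<and> real p \<le> pi / arccos (m - 1) \<and>
               1 \<le> q \<and> real q \<le> pi / arccos (m - 1) \<and>
               b = real p * a / real q" if m2: "m < 2" and bO: "b \<in> Omega a m" for b
  proof (cases "a = 0")
    case True
    then have "b = 0" using zero_case m2 bO by blast
    moreover have "real 1 \<le> pi / arccos (m - 1)" by (rule bound) (use m2 assms in auto)
    ultimately show ?thesis using True by (intro exI[of _ "1::nat"]) auto
  next
    case False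
    then have a: "a > 0" using assms by simp
    have "b \<ge> 0" "\<forall>t. \<bar>cos (t * a) - cos (t * b)\<bar> \<le> m" using bO by (auto simp: Omega_iff)
    then obtain p q :: nat where pq: "odd p" "odd q" "coprime p q" "1 \<le> p" "1 \<le> q"
      "b = real p * a / real q" "cos (pi / real p) + 1 \<le> m" "cos (pi / real q) + 1 \<le> m"
      using main[OF a _ m2 assms(2)] by blast
    show ?thesis using pq bound[OF pq(4) pq(7) m2] bound[OF pq(5) pq(8) m2]
      by (intro exI[of _ p] exI[of _ q]) auto
  qed
  have part1: "m < 2 \<longrightarrow> finite (Omega a m) \<and>
            (\<forall>b\<in>Omega a m. \<exists>p q :: nat.
               odd p \<and> odd q \<and> coprime p q \<and>
               1 \<le> p \<and> real p \<le> pi / arccos (m - 1) \<and>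
               1 \<le> q \<and> real q \<le> pi / arccos (m - 1) \<and>
               b = real p * a / real q)"
  proof
    assume m2: "m < 2"
    define N where "N = nat \<lceil>pi / arccos (m - 1)\<rceil>"
    have "Omega a m \<subseteq> (\<lambda>(p, q). real p * a / real q) ` ({..N} \<times> {..N})"
    proof
      fix b assume "b \<in> Omega a m"
      then obtain p q :: nat where pq: "real p \<le> pi / arccos (m - 1)"
        "real q \<le> pi / arccos (m - 1)" "b = real p * a / real q"
        using rep m2 by blast
      have "p \<le> N" "q \<le> N" using natbound pq unfolding N_def by auto
      then show "b \<in> (\<lambda>(p, q). real p * a / real q) ` ({..N} \<times> {..N})"
        using pq(3) by (auto intro!: image_eqI[of _ _ "(p, q)"])
    qed
    then have "finite (Omega a m)" by (rule finite_subset) simp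
    then show "finite (Omega a m) \<and> (\<forall>b\<in>Omega a m. \<exists>p q :: nat.
               odd p \<and> odd q \<and> coprime p q \<and>
               1 \<le> p \<and> real p \<le> pi / arccos (m - 1) \<and>
               1 \<le> q \<and> real q \<le> pi / arccos (m - 1) \<and>
               b = real p * a / real q)" using rep m2 by blast
  qed
  have part2: "m < 8 / (3 * sqrt 3) \<longrightarrow> Omega a m = {a}"
  proof
    assume m8: "m < 8 / (3 * sqrt 3)"
    have m2: "m < 2" using m8 num1 by linarith
    have "a \<in> Omega a m" using assms by (simp add: Omega_iff)
    moreover have "b = a" if bO: "b \<in> Omega a m" for b
    proof (cases "a = 0")
      case True
      then show ?thesis using zero_case m2 bO by blast
    next
      case False
      then have a: "a > 0" using assms by simp
      have H: "b \<ge> 0" "\<forall>t. \<bar>cos (t * a) - cos (t * b)\<bar> \<le> m" using bO by (auto simp: Omega_iff)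
      then obtain p q :: nat where pq: "odd p" "odd q" "coprime p q" "1 \<le> p" "1 \<le> q"
        "b = real p * a / real q" "cos (pi / real p) + 1 \<le> m" "cos (pi / real q) + 1 \<le> m"
        using main[OF a _ m2 assms(2)] by blast
      have mm: "m < sqrt 2 / 2 + 1" using m8 num2 by linarith
      have p13: "p = 1 \<or> p = 3" using small[OF pq(1) pq(7) mm] .
      have q13: "q = 1 \<or> q = 3" using small[OF pq(2) pq(8) mm] .
      obtain s where s: "\<bar>cos (3 * s) - cos s\<bar> = 8 / (3 * sqrt 3)" using triple by blast
      show ?thesis
      proof (cases "p = 1")
        case p1: True
        show ?thesis
        proof (cases "q = 1")
          case True then show ?thesis using p1 pq(6) by simp
        next
          case False
          then have "q = 3" using q13 by simp
          then have "b = a / 3" using p1 pq(6) by simp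
          then have "(3 * s / a) * a = 3 * s" "(3 * s / a) * b = s" using a by auto
          then show ?thesis using H(2)[rule_format, of "3 * s / a"] s m8 by simp
        qed
      next
        case False
        then have "p = 3" using p13 by simp
        then have "q = 1" using q13 pq(3) by auto
        then have "b = 3 * a" using \<open>p = 3\<close> pq(6) by simp
        then have "(s / a) * a = s" "(s / a) * b = 3 * s" using a by auto
        then show ?thesis using H(2)[rule_format, of "s / a"] s m8 by (simp add: abs_minus_commute)
      qed
    qed
    ultimately show "Omega a m = {a}" by blast
  qed
  show ?thesis using part1 part2 by blast
qed

end
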